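(* Let $\xi_1,\xi_2,\ldots$ be i.i.d. random vectors in $\mathbb{R}^d$ with Lebesgue density $g$, and for the sample $\xi_1,\dots,\xi_n$ let $R_n(i)=\min_{j\ne i}|\xi_i-\xi_j|$, $B_n(\xi_i)=\{y:|y-\xi_i|\le R_n(i)\}$ and $z_{i,n}(\theta_0)=n\int_{B_n(\xi_i)}g(y)\,dy$. Fix $i$ and let $X_n$ be random vectors with $X_n\xrightarrow{p}X$, where the components of $X$ are continuous functions of $\xi_i$ only. Then \[ \begin{pmatrix} z_{i,n}(\theta_0)\\ X_n\end{pmatrix}\xrightarrow{D}\begin{pmatrix} Z\\ X\end{pmatrix}, \] where $Z\sim \mathrm{Exp}(1)$ is independent of $X$.
   Context: $g=f_{\theta_0}$ is the true density of a parametric model, so $z_{i,n}(\theta_0)=nP_{\theta_0}(B_n(\xi_i))$ is $n$ times the true probability of the nearest neighbour ball of $\xi_i$. *)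

theory Defs
  imports "HOL-Probability.Probability"
begin

definition nn_radius :: "(nat \<Rightarrow> 'w \<Rightarrow> 'd::metric_space) \<Rightarrow> nat \<Rightarrow> nat \<Rightarrow> 'w \<Rightarrow> real" where
  "nn_radius \<xi> n i \<omega> = Min ((\<lambda>j. dist (\<xi> i \<omega>) (\<xi> j \<omega>)) ` ({1..n} - {i}))"

definition z_stat :: "('d::euclidean_space \<Rightarrow> real) \<Rightarrow> (nat \<Rightarrow> 'w \<Rightarrow> 'd) \<Rightarrow> nat \<Rightarrow> nat \<Rightarrow> 'w \<Rightarrow> real" where
  "z_stat g \<xi> i n \<omega> = real n * (LINT y : cball (\<xi> i \<omega>) (nn_radius \<xi> n i \<omega>) | lborel. g y)"

definition conv_in_prob :: "'w measure \<Rightarrow> (nat \<Rightarrow> 'w \<Rightarrow> 'b::metric_space) \<Rightarrow> ('w \<Rightarrow> 'b) \<Rightarrow> bool" where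
  "conv_in_prob M Y Z \<longleftrightarrow>
     (\<forall>e>0. (\<lambda>n. measure M {\<omega> \<in> space M. dist (Y n \<omega>) (Z \<omega>) > e}) \<longlonglongrightarrow> 0)"

definition conv_in_dist :: "'w measure \<Rightarrow> (nat \<Rightarrow> 'w \<Rightarrow> 'b::topological_space) \<Rightarrow> 'b measure \<Rightarrow> bool" where
  "conv_in_dist M Y L \<longleftrightarrow>
     (\<forall>f :: 'b \<Rightarrow> real. continuous_on UNIV f \<longrightarrow> bounded (range f) \<longrightarrow>
        (\<lambda>n. \<integral>\<omega>. f (Y n \<omega>) \<partial>M) \<longlonglongrightarrow> (\<integral>x. f x \<partial>L))"

end

theory Submission
  imports Defs
begin
lemma unif_transform:
  fixes \<mu> :: "'d::euclidean_space measure" and x :: 'd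
  assumes P: "prob_space \<mu>" and S: "sets \<mu> = sets borel"
    and null: "\<And>r. measure \<mu> (sphere x r) = 0"
    and s: "0 \<le> s" "s \<le> 1"
  shows "measure \<mu> {y. s < measure \<mu> (cball x (dist x y))} = 1 - s"
proof -
  interpret prob_space \<mu> by fact
  have sp: "space \<mu> = UNIV" using sets_eq_imp_space_eq[OF S] by simp
  define \<nu> where "\<nu> = distr \<mu> borel (dist x)"
  have dm: "dist x \<in> borel_measurable \<mu>"
    by (subst measurable_cong_sets[OF S refl]) (auto intro!: borel_measurable_dist measurable_const measurable_ident_sets)
  interpret nu: real_distribution \<nu>
    unfolding \<nu>_def by (intro real_distribution.intro prob_space_distr dm real_distribution_axioms.intro) simp
  have cdfeq: "cdf \<nu> r = measure \<mu> (cball x r)" for r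
  proof -
    have "cdf \<nu> r = measure \<mu> (dist x -` {..r} \<inter> space \<mu>)"
      unfolding cdf_def \<nu>_def by (subst measure_distr[OF dm]) auto
    also have "dist x -` {..r} \<inter> space \<mu> = cball x r" by (auto simp: sp cball_def)
    finally show ?thesis .
  qed
  have cont: "isCont (cdf \<nu>) r" for r
  proof -
    have "measure \<nu> {r} = measure \<mu> (dist x -` {r} \<inter> space \<mu>)"
      unfolding \<nu>_def by (subst measure_distr[OF dm]) auto
    also have "dist x -` {r} \<inter> space \<mu> = sphere x r" by (auto simp: sp sphere_def)
    finally show ?thesis using nu.isCont_cdf null by simp
  qed
  have contu: "continuous_on UNIV (cdf \<nu>)" using cont by (simp add: continuous_at_imp_continuous_on)
  have "{y. s < measure \<mu> (cball x (dist x y))} = dist x -` {r. s < cdf \<nu> r} \<inter> space \<mu>"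
    by (auto simp: sp cdfeq)
  moreover have "{r. s < cdf \<nu> r} \<in> sets borel"
    by (intro borel_open open_Collect_less continuous_on_const contu)
  ultimately have eq1: "measure \<mu> {y. s < measure \<mu> (cball x (dist x y))} = measure \<nu> {r. s < cdf \<nu> r}"
    unfolding \<nu>_def by (simp add: measure_distr[OF dm])
  show ?thesis
  proof (cases "s = 1")
    case True
    then have "{r. s < cdf \<nu> r} = {}" using nu.cdf_bounded_prob by (auto simp: not_less)
    then show ?thesis using eq1 True by simp
  next
    case False
    with s have s1: "s < 1" by simp
    define A where "A = {r. cdf \<nu> r \<le> s}"
    have m1: "-1 \<in> A" unfolding A_def cdfeq using s by simp
    from nu.cdf_lim_at_top_prob s1 have "eventually (\<lambda>r. s < cdf \<nu> r) at_top"
      by (simp add: order_tendstoD(1))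
    then obtain R where R: "\<And>r. r \<ge> R \<Longrightarrow> s < cdf \<nu> r" by (auto simp: eventually_at_top_linorder)
    have bdd: "bdd_above A" unfolding A_def bdd_above_def
      by (metis R linorder_not_le mem_Collect_eq order_less_le)
    have clA: "closed A" unfolding A_def by (intro closed_Collect_le contu continuous_on_const)
    define r0 where "r0 = Sup A"
    have r0A: "r0 \<in> A" unfolding r0_def using closed_contains_Sup[OF _ bdd clA] m1 by blast
    have gt: "s < cdf \<nu> r" if "r > r0" for r
      using that cSup_upper[OF _ bdd, of r] unfolding r0_def A_def by force
    have eqs: "cdf \<nu> r0 = s"
    proof (rule ccontr)
      assume "cdf \<nu> r0 \<noteq> s"
      with r0A have lt: "cdf \<nu> r0 < s" unfolding A_def by simp
      from cont[of r0] have "(cdf \<nu> \<longlongrightarrow> cdf \<nu> r0) (at_right r0)"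
        by (simp add: isCont_def filterlim_at_split)
      hence "eventually (\<lambda>r. cdf \<nu> r < s) (at_right r0)" using lt by (simp add: order_tendstoD(2))
      then obtain b where b: "b > r0" "\<And>r. r0 < r \<Longrightarrow> r < b \<Longrightarrow> cdf \<nu> r < s"
        by (auto simp: eventually_at_right_field)
      have "cdf \<nu> ((r0 + b)/2) < s" using b by auto
      moreover have "s < cdf \<nu> ((r0 + b)/2)" using gt b by auto
      ultimately show False by simp
    qed
    have "{r. s < cdf \<nu> r} = {r0<..}"
    proof safe
      fix r assume "s < cdf \<nu> r"
      then show "r0 < r" using nu.cdf_nondecreasing[of r r0] eqs by (meson less_le_trans not_less)
    qed (use gt in auto)
    moreover have "measure \<nu> {r0<..} = 1 - cdf \<nu> r0"
    proof -
      have "{r0<..} = space \<nu> - {..r0}" using nu.borel_UNIV by auto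
      then show ?thesis using nu.prob_compl[of "{..r0}"] by (simp add: cdf_def)
    qed
    ultimately show ?thesis using eq1 eqs by simp
  qed
qed

lemma pim_tail:
  fixes \<mu> :: "'d::euclidean_space measure" and x :: 'd and J :: "nat set"
  assumes P: "prob_space \<mu>" and S: "sets \<mu> = sets borel"
    and U: "measure \<mu> {y. s < measure \<mu> (cball x (dist x y))} = 1 - s"
    and J: "finite J" "J \<noteq> {}"
  shows "measure (PiM J (\<lambda>_. \<mu>)) {y \<in> space (PiM J (\<lambda>_. \<mu>)). s < measure \<mu> (cball x (Min ((\<lambda>j. dist x (y j)) ` J)))} = (1 - s) ^ card J"
proof -
  interpret prob_space \<mu> by fact
  interpret fp: finite_product_prob_space "\<lambda>_. \<mu>" J
    unfolding finite_product_prob_space_def finite_product_sigma_finite_def product_prob_space_def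
      product_prob_space_axioms_def product_sigma_finite_def finite_product_sigma_finite_axioms_def
    using J P by (auto simp: prob_space_imp_sigma_finite)
  have sp: "space \<mu> = UNIV" using sets_eq_imp_space_eq[OF S] by simp
  define C where "C r = measure \<mu> (cball x r)" for r
  have Cmono: "mono C" unfolding C_def mono_def
    by (intro allI impI finite_measure_mono) (auto simp: S)
  have Cm: "C \<in> borel_measurable borel" using Cmono by (rule borel_measurable_mono)
  define B where "B = {z. s < C (dist x z)}"
  have Bm: "B \<in> sets \<mu>"
  proof -
    have "(\<lambda>z. C (dist x z)) \<in> borel_measurable \<mu>"
      by (subst measurable_cong_sets[OF S refl]) (auto intro!: measurable_compose[OF _ Cm] borel_measurable_dist measurable_const measurable_ident_sets)
    then have "{z \<in> space \<mu>. s < C (dist x z)} \<in> sets \<mu>" by measurable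
    then show ?thesis by (simp add: sp B_def)
  qed
  have "{y \<in> space (PiM J (\<lambda>_. \<mu>)). s < measure \<mu> (cball x (Min ((\<lambda>j. dist x (y j)) ` J)))} = PiE J (\<lambda>_. B)"
  proof (intro equalityI subsetI)
    fix y assume "y \<in> {y \<in> space (PiM J (\<lambda>_. \<mu>)). s < measure \<mu> (cball x (Min ((\<lambda>j. dist x (y j)) ` J)))}"
    then have y: "y \<in> space (PiM J (\<lambda>_. \<mu>))" and lt: "s < measure \<mu> (cball x (Min ((\<lambda>j. dist x (y j)) ` J)))" by auto
    have "s < C (dist x (y j))" if "j \<in> J" for j
    proof -
      have "Min ((\<lambda>j. dist x (y j)) ` J) \<le> dist x (y j)" using that J by auto
      then show ?thesis using lt Cmono unfolding C_def mono_def by (meson less_le_trans)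
    qed
    then show "y \<in> PiE J (\<lambda>_. B)" using y by (auto simp: space_PiM B_def)
  next
    fix y assume y: "y \<in> PiE J (\<lambda>_. B)"
    then have 1: "y \<in> space (PiM J (\<lambda>_. \<mu>))" by (auto simp: space_PiM sp)
    have "Min ((\<lambda>j. dist x (y j)) ` J) \<in> (\<lambda>j. dist x (y j)) ` J" by (rule Min_in) (use J in auto)
    then obtain j where j: "j \<in> J" "Min ((\<lambda>j. dist x (y j)) ` J) = dist x (y j)" by auto
    then have "s < measure \<mu> (cball x (Min ((\<lambda>j. dist x (y j)) ` J)))"
      using y by (auto simp: B_def C_def)
    with 1 show "y \<in> {y \<in> space (PiM J (\<lambda>_. \<mu>)). s < measure \<mu> (cball x (Min ((\<lambda>j. dist x (y j)) ` J)))}" by simp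
  qed
  also have "measure (PiM J (\<lambda>_. \<mu>)) (PiE J (\<lambda>_. B)) = (\<Prod>j\<in>J. measure \<mu> B)"
    by (rule fp.prob_times) (use Bm in auto)
  also have "\<dots> = (1 - s) ^ card J" using U by (simp add: B_def C_def)
  finally show ?thesis .
qed

lemma exp_lim_aux: "(\<lambda>n. (1 - t / real n) ^ (n - 1)) \<longlonglongrightarrow> exp (- t)"
proof -
  have a: "(\<lambda>n. (1 + (-t) / real n) ^ n) \<longlonglongrightarrow> exp (- t)" by (rule tendsto_exp_limit_sequentially)
  have b: "(\<lambda>n. 1 - t / real n) \<longlonglongrightarrow> 1 - 0"
    by (intro tendsto_diff tendsto_const tendsto_divide_0[OF tendsto_const] filterlim_at_top_imp_at_infinity[OF filterlim_real_sequentially])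
  have c: "(\<lambda>n. (1 + (-t) / real n) ^ n / (1 - t / real n)) \<longlonglongrightarrow> exp (- t) / (1 - 0)"
    by (intro tendsto_divide a b) simp
  have ev: "eventually (\<lambda>n. (1 + (-t) / real n) ^ n / (1 - t / real n) = (1 - t / real n) ^ (n - 1)) sequentially"
  proof -
    obtain N :: nat where N: "real N > \<bar>t\<bar>" using reals_Archimedean2 by blast
    have "(1 + (-t) / real n) ^ n / (1 - t / real n) = (1 - t / real n) ^ (n - 1)" if "n \<ge> N + 1" for n
    proof -
      have n0: "real n > \<bar>t\<bar>" using that N by linarith
      then have ne: "1 - t / real n \<noteq> 0" by (auto simp: field_simps split: if_splits)
      have "n = Suc (n - 1)" using that by simp
      then have "(1 - t / real n) ^ n = (1 - t / real n) * (1 - t / real n) ^ (n - 1)"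
        by (metis power_Suc)
      then show ?thesis using ne by (simp add: field_simps)
    qed
    then show ?thesis unfolding eventually_sequentially by blast
  qed
  show ?thesis using Lim_transform_eventually[OF c ev] by simp
qed

definition Expo :: "real measure" where "Expo = density lborel (\<lambda>x. ennreal (exponential_density 1 x))"

lemma real_distribution_Expo: "real_distribution Expo"
  unfolding Expo_def
  by (intro real_distribution.intro prob_space_exponential_density real_distribution_axioms.intro) simp_all

lemma cdf_Expo: "cdf Expo t = (if t < 0 then 0 else 1 - exp (- t))"
proof -
  interpret E: real_distribution Expo by (rule real_distribution_Expo)
  have D: "distributed Expo lborel (\<lambda>x. x) (exponential_density 1)"
    unfolding distributed_def Expo_def
    by (auto simp: distr_id2)
  have le: "cdf Expo a = 1 - exp (- a)" if "0 \<le> a" for a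
  proof -
    have "cdf Expo a = \<P>(x in Expo. x \<le> a)" unfolding cdf_def
      by (simp add: E.borel_UNIV Collect_mono atMost_def)
    also have "\<dots> = 1 - exp (- a * 1)" by (rule E.exponential_distributedD_le[OF D that]) simp
    finally show ?thesis by simp
  qed
  show ?thesis
  proof (cases "t < 0")
    case True
    then have "cdf Expo t \<le> cdf Expo 0" by (intro E.cdf_nondecreasing) simp
    also have "\<dots> = 0" using le[of 0] by simp
    finally show ?thesis using True E.cdf_nonneg[of t] by simp
  qed (use le in auto)
qed

lemma Phi_measurable:
  fixes \<mu> :: "'d::euclidean_space measure" and x :: 'd
  assumes S: "sets \<mu> = sets borel" and J: "finite J" and P: "prob_space \<mu>"
  shows "(\<lambda>y. c * measure \<mu> (cball x (Min ((\<lambda>j. dist x (y j)) ` J)))) \<in> borel_measurable (PiM J (\<lambda>_. \<mu>))"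
proof -
  interpret prob_space \<mu> by fact
  have Cm: "(\<lambda>r. measure \<mu> (cball x r)) \<in> borel_measurable borel"
    by (rule borel_measurable_mono) (auto simp: mono_def S intro!: finite_measure_mono)
  have comp: "(\<lambda>y. dist x (y j)) \<in> borel_measurable (PiM J (\<lambda>_. \<mu>))" if "j \<in> J" for j
  proof -
    have "(\<lambda>y. y j) \<in> measurable (PiM J (\<lambda>_. \<mu>)) \<mu>" using that by (rule measurable_component_singleton)
    then have "(\<lambda>y. y j) \<in> measurable (PiM J (\<lambda>_. \<mu>)) borel" using measurable_cong_sets[OF refl S] by blast
    then show ?thesis by (intro borel_measurable_dist measurable_const) auto
  qed
  have "(\<lambda>y. Min ((\<lambda>j. dist x (y j)) ` J)) \<in> borel_measurable (PiM J (\<lambda>_. \<mu>))"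
    using borel_measurable_Min[OF J comp] by simp
  then show ?thesis by (intro borel_measurable_times measurable_const measurable_compose[OF _ Cm]) auto
qed

lemma inner_conv:
  fixes \<mu> :: "'d::euclidean_space measure" and x :: 'd and f :: "real \<Rightarrow> real" and i :: nat
  assumes P: "prob_space \<mu>" and S: "sets \<mu> = sets borel" and null: "\<And>r. measure \<mu> (sphere x r) = 0"
    and fc: "\<And>z. isCont f z" and fb: "\<And>z. norm (f z) \<le> K" and i: "i \<ge> 1"
  shows "(\<lambda>n. \<integral>y. f (real n * measure \<mu> (cball x (Min ((\<lambda>j. dist x (y j)) ` ({1..n} - {i}))))) \<partial>PiM ({1..n} - {i}) (\<lambda>_. \<mu>))
          \<longlonglongrightarrow> (\<integral>z. f z \<partial>Expo)"
proof -
  interpret prob_space \<mu> by fact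
  define J where "J n = {1..n} - {i}" for n :: nat
  define \<Phi> where "\<Phi> n y = real n * measure \<mu> (cball x (Min ((\<lambda>j. dist x (y j)) ` J n)))" for n y
  define \<nu> where "\<nu> n = distr (PiM (J n) (\<lambda>_. \<mu>)) borel (\<Phi> n)" for n
  have Jf: "finite (J n)" for n unfolding J_def by simp
  have \<Phi>m: "\<Phi> n \<in> borel_measurable (PiM (J n) (\<lambda>_. \<mu>))" for n
    unfolding \<Phi>_def[abs_def] by (rule Phi_measurable[OF S Jf P])
  have PiP: "prob_space (PiM (J n) (\<lambda>_. \<mu>))" for n by (rule prob_space_PiM) (use P in simp)
  have rd: "real_distribution (\<nu> n)" for n
    unfolding \<nu>_def by (intro real_distribution.intro prob_space.prob_space_distr[OF PiP] \<Phi>m real_distribution_axioms.intro) simp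
  have cdfnu: "cdf (\<nu> n) t = measure (PiM (J n) (\<lambda>_. \<mu>)) {y \<in> space (PiM (J n) (\<lambda>_. \<mu>)). \<Phi> n y \<le> t}" for n t
    unfolding cdf_def \<nu>_def by (subst measure_distr[OF \<Phi>m]) (auto simp: vimage_def Int_def conj_commute)
  have wc: "weak_conv_m \<nu> Expo"
    unfolding weak_conv_m_def weak_conv_def
  proof (intro allI impI)
    fix t :: real
    show "(\<lambda>n. cdf (\<nu> n) t) \<longlonglongrightarrow> cdf Expo t"
    proof (cases "t < 0")
      case True
      have "cdf (\<nu> n) t = 0" for n
      proof -
        have "\<Phi> n y \<ge> 0" for y unfolding \<Phi>_def by simp
        then have "\<not> \<Phi> n y \<le> t" for y using True by (meson le_less_trans linorder_not_le)
        then have e: "{y \<in> space (PiM (J n) (\<lambda>_. \<mu>)). \<Phi> n y \<le> t} = {}" by auto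
        show ?thesis unfolding cdfnu e by simp
      qed
      then show ?thesis using True by (simp add: cdf_Expo)
    next
      case False
      then have t0: "t \<ge> 0" by simp
      obtain N :: nat where N: "real N > t" using reals_Archimedean2 by blast
      have ev: "cdf (\<nu> n) t = 1 - (1 - t / real n) ^ (n - 1)" if n: "n \<ge> N + i" for n
      proof -
        interpret PP: prob_space "PiM (J n) (\<lambda>_. \<mu>)" by (rule PiP)
        have nt: "real n > t" using n N by linarith
        have npos: "real n > 0" using nt t0 by linarith
        have s: "0 \<le> t / real n" "t / real n \<le> 1" using t0 nt npos by (auto simp: field_simps)
        have cardJ: "card (J n) = n - 1" unfolding J_def using n i by (simp add: card_Diff_singleton)
        have N1: "N \<ge> 1" using N t0 by (cases N) auto
        have Jne: "J n \<noteq> {}"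
        proof (cases "i = 1")
          case True
          then have "2 \<in> J n" unfolding J_def using n N1 by auto
          then show ?thesis by auto
        next
          case False
          then have "1 \<in> J n" unfolding J_def using n N1 i by auto
          then show ?thesis by auto
        qed
        have U: "measure \<mu> {y. t / real n < measure \<mu> (cball x (dist x y))} = 1 - t / real n"
          by (rule unif_transform[OF P S null s])
        have eqset: "{y \<in> space (PiM (J n) (\<lambda>_. \<mu>)). t < \<Phi> n y} =
            {y \<in> space (PiM (J n) (\<lambda>_. \<mu>)). t / real n < measure \<mu> (cball x (Min ((\<lambda>j. dist x (y j)) ` J n)))}"
          unfolding \<Phi>_def using npos by (auto simp: field_simps)
        have tail: "measure (PiM (J n) (\<lambda>_. \<mu>)) {y \<in> space (PiM (J n) (\<lambda>_. \<mu>)). t < \<Phi> n y} = (1 - t / real n) ^ (n - 1)"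
          unfolding eqset using pim_tail[OF P S U Jf Jne] cardJ by simp
        have "{y \<in> space (PiM (J n) (\<lambda>_. \<mu>)). \<Phi> n y \<le> t} = space (PiM (J n) (\<lambda>_. \<mu>)) - {y \<in> space (PiM (J n) (\<lambda>_. \<mu>)). t < \<Phi> n y}"
          by auto
        moreover have "{y \<in> space (PiM (J n) (\<lambda>_. \<mu>)). t < \<Phi> n y} \<in> sets (PiM (J n) (\<lambda>_. \<mu>))"
          using \<Phi>m[of n] by measurable
        ultimately show ?thesis using cdfnu PP.prob_compl tail by simp
      qed
      have lim: "(\<lambda>n. 1 - (1 - t / real n) ^ (n - 1)) \<longlonglongrightarrow> 1 - exp (- t)"
        by (intro tendsto_diff tendsto_const exp_lim_aux)
      have "eventually (\<lambda>n. 1 - (1 - t / real n) ^ (n - 1) = cdf (\<nu> n) t) sequentially"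
        unfolding eventually_sequentially using ev by metis
      from Lim_transform_eventually[OF lim this] show ?thesis using t0 by (simp add: cdf_Expo)
    qed
  qed
  have conv: "(\<lambda>n. integral\<^sup>L (\<nu> n) f) \<longlonglongrightarrow> integral\<^sup>L Expo f"
    by (rule weak_conv_imp_integral_bdd_continuous_conv[OF rd real_distribution_Expo wc fc fb])
  have fm: "f \<in> borel_measurable borel"
    by (intro borel_measurable_continuous_onI continuous_at_imp_continuous_on) (use fc in auto)
  have "integral\<^sup>L (\<nu> n) f = (\<integral>y. f (\<Phi> n y) \<partial>PiM (J n) (\<lambda>_. \<mu>))" for n
    unfolding \<nu>_def by (rule integral_distr[OF \<Phi>m fm])
  then show ?thesis using conv unfolding \<Phi>_def J_def by simp
qed

context
  fixes M :: "'w measure"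
    and \<xi> :: "nat \<Rightarrow> 'w \<Rightarrow> 'd::euclidean_space"
    and g :: "'d \<Rightarrow> real"
  assumes PM: "prob_space M"
    and gm: "g \<in> borel_measurable lborel" and gnn: "\<And>x. g x \<ge> 0"
    and dist: "\<And>j. distributed M lborel (\<xi> j) (\<lambda>x. ennreal (g x))"
begin

definition "mu = density lborel (\<lambda>x. ennreal (g x))"

lemma sets_mu: "sets mu = sets borel" unfolding mu_def by simp

lemma space_mu: "space mu = UNIV" unfolding mu_def by simp

lemma distr_xi: "distr M borel (\<xi> j) = mu"
proof -
  have "distr M borel (\<xi> j) = distr M lborel (\<xi> j)" by (rule distr_cong) auto
  also have "\<dots> = mu" using dist[of j] unfolding distributed_def mu_def by simp
  finally show ?thesis .
qed

lemma xi_meas: "\<xi> j \<in> borel_measurable M"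
  using dist[of j] unfolding distributed_def by (simp add: measurable_lborel2)

lemma prob_mu: "prob_space mu"
proof -
  interpret prob_space M by (rule PM)
  show ?thesis unfolding distr_xi[of 0, symmetric] by (rule prob_space_distr) (rule xi_meas)
qed

lemma sphere_null: "measure mu (sphere x r) = 0"
proof -
  have N: "sphere x r \<in> null_sets lborel"
    using negligible_sphere[of x r] by (auto simp: null_sets_completion_iff negligible_iff_null_sets negligible_convex_frontier)
  have "emeasure mu (sphere x r) = (\<integral>\<^sup>+ y. ennreal (g y) * indicator (sphere x r) y \<partial>lborel)"
    unfolding mu_def by (rule emeasure_density) (use gm in auto)
  also have "\<dots> = 0" by (rule nn_integral_null_set[OF N])
  finally show ?thesis by (simp add: measure_def)
qed

lemma lint_eq_measure: "(LINT y : A | lborel. g y) = measure mu A" if "A \<in> sets borel"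
proof -
  interpret prob_space mu by (rule prob_mu)
  have "measure mu A = integral\<^sup>L mu (indicator A)"
    using that by (simp add: sets_mu)
  also have "\<dots> = integral\<^sup>L lborel (\<lambda>x. g x *\<^sub>R indicator A x)"
    unfolding mu_def by (rule integral_density) (use gm gnn that in auto)
  also have "\<dots> = (LINT y : A | lborel. g y)"
    unfolding set_lebesgue_integral_def by (simp add: mult.commute)
  finally show ?thesis by simp
qed

end

lemma prob_integral_bound:
  fixes f :: "'a \<Rightarrow> real"
  assumes P: "prob_space P" and b: "\<And>x. \<bar>f x\<bar> \<le> K"
  shows "\<bar>integral\<^sup>L P f\<bar> \<le> K"
proof (cases "integrable P f")
  case True
  interpret prob_space P by fact
  have "\<bar>integral\<^sup>L P f\<bar> \<le> (\<integral>x. \<bar>f x\<bar> \<partial>P)" by (rule integral_abs_bound)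
  also have "\<dots> \<le> (\<integral>x. K \<partial>P)" by (rule integral_mono) (use True b in auto)
  finally show ?thesis by (simp add: prob_space)
next
  case False
  then show ?thesis using b[of undefined] by (simp add: not_integrable_integral_eq)
qed

context
  fixes M :: "'w measure"
    and \<xi> :: "nat \<Rightarrow> 'w \<Rightarrow> 'd::euclidean_space"
    and g :: "'d \<Rightarrow> real"
    and i :: nat
  assumes PM: "prob_space M"
    and gm: "g \<in> borel_measurable lborel" and gnn: "\<And>x. g x \<ge> 0"
    and distrib: "\<And>j. distributed M lborel (\<xi> j) (\<lambda>x. ennreal (g x))"
    and indep: "prob_space.indep_vars M (\<lambda>_. borel) \<xi> UNIV"
    and i1: "i \<ge> 1"
begin

abbreviation "\<mu> \<equiv> mu g"

lemmas sets_mu' = sets_mu[OF PM gm gnn distrib]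
lemmas space_mu' = space_mu[OF PM gm gnn distrib]
lemmas distr_xi' = distr_xi[OF PM gm gnn distrib]
lemmas xi_meas' = xi_meas[OF PM gm gnn distrib]
lemmas prob_mu' = prob_mu[OF PM gm gnn distrib]
lemmas sphere_null' = sphere_null[OF PM gm gnn distrib]
lemmas lint_eq_measure' = lint_eq_measure[OF PM gm gnn distrib]

lemma Cm: "(\<lambda>p. measure \<mu> (cball (fst p) (snd p))) \<in> borel_measurable (borel :: ('d \<times> real) measure)"
proof -
  interpret mu: prob_space \<mu> by (rule prob_mu')
  define Q where "Q = {q. dist (fst (fst q)) (snd q) \<le> snd (fst (q :: ('d \<times> real) \<times> 'd))}"
  have "closed Q" unfolding Q_def
    by (intro closed_Collect_le continuous_intros) 
  then have "Q \<in> sets (borel \<Otimes>\<^sub>M borel)" by (subst borel_prod) (rule borel_closed)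
  then have Qs: "Q \<in> sets ((borel :: ('d \<times> real) measure) \<Otimes>\<^sub>M \<mu>)"
    by (simp add: sets_pair_measure_cong[OF refl sets_mu'])
  have "(\<lambda>p. emeasure \<mu> (Pair p -` Q)) \<in> borel_measurable borel"
    by (rule mu.measurable_emeasure_Pair[OF Qs])
  moreover have "Pair p -` Q = cball (fst p) (snd p)" for p unfolding Q_def by (auto simp: cball_def)
  ultimately have "(\<lambda>p. emeasure \<mu> (cball (fst p) (snd p))) \<in> borel_measurable borel" by simp
  then have "(\<lambda>p. enn2real (emeasure \<mu> (cball (fst p) (snd p)))) \<in> borel_measurable borel" by measurable
  then show ?thesis by (simp add: measure_def)
qed


definition "Jn n = {1..n} - {i}"
definition "Phi n x y = real n * measure \<mu> (cball x (Min ((\<lambda>j. dist x (y j)) ` Jn n)))"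
definition "Yn n \<omega> = restrict (\<lambda>j. \<xi> j \<omega>) (Jn n)"

lemma Jn_finite: "finite (Jn n)" unfolding Jn_def by simp

lemma Jn_ne: "n \<ge> i + 1 \<Longrightarrow> Jn n \<noteq> {}"
proof (cases "i = 1")
  case True
  assume "n \<ge> i + 1"
  then have "2 \<in> Jn n" unfolding Jn_def using True by auto
  then show ?thesis by auto
next
  case False
  assume "n \<ge> i + 1"
  then have "1 \<in> Jn n" unfolding Jn_def using False i1 by auto
  then show ?thesis by auto
qed

lemma z_eq: "z_stat g \<xi> i n \<omega> = Phi n (\<xi> i \<omega>) (Yn n \<omega>)"
proof -
  have "(\<lambda>j. dist (\<xi> i \<omega>) (\<xi> j \<omega>)) ` ({1..n} - {i}) = (\<lambda>j. dist (\<xi> i \<omega>) (Yn n \<omega> j)) ` Jn n"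
    unfolding Yn_def Jn_def by (intro image_cong) auto
  then show ?thesis
    unfolding z_stat_def nn_radius_def Phi_def
    by (simp add: lint_eq_measure'[OF borel_closed[OF closed_cball]])
qed

lemma Phi_meas: "(\<lambda>p. Phi n (fst p) (snd p)) \<in> borel_measurable (borel \<Otimes>\<^sub>M PiM (Jn n) (\<lambda>_. borel))"
proof -
  have comp: "(\<lambda>p. dist (fst p) (snd p j)) \<in> borel_measurable ((borel :: 'd measure) \<Otimes>\<^sub>M PiM (Jn n) (\<lambda>_. (borel :: 'd measure)))"
    if "j \<in> Jn n" for j :: nat
  proof -
    have s: "(\<lambda>p. snd p j) \<in> measurable ((borel :: 'd measure) \<Otimes>\<^sub>M PiM (Jn n) (\<lambda>_. (borel :: 'd measure))) borel"
      by (rule measurable_compose[OF measurable_snd measurable_component_singleton[OF that]])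
    have f: "(\<lambda>p. fst p) \<in> measurable ((borel :: 'd measure) \<Otimes>\<^sub>M PiM (Jn n) (\<lambda>_. (borel :: 'd measure))) borel"
      by (rule measurable_fst)
    show ?thesis by (rule borel_measurable_dist[OF f s])
  qed
  have mn: "(\<lambda>p. Min ((\<lambda>j. dist (fst p) (snd p j)) ` Jn n)) \<in> borel_measurable ((borel :: 'd measure) \<Otimes>\<^sub>M PiM (Jn n) (\<lambda>_. (borel :: 'd measure)))"
    using borel_measurable_Min[OF Jn_finite comp] by simp
  have pr: "(\<lambda>p. (fst p, Min ((\<lambda>j. dist (fst p) (snd p j)) ` Jn n))) \<in> measurable ((borel :: 'd measure) \<Otimes>\<^sub>M PiM (Jn n) (\<lambda>_. (borel :: 'd measure))) (borel :: ('d \<times> real) measure)"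
    unfolding borel_prod[symmetric] by (intro measurable_Pair measurable_fst mn)
  have "(\<lambda>p. measure \<mu> (cball (fst p) (Min ((\<lambda>j. dist (fst p) (snd p j)) ` Jn n)))) \<in> borel_measurable (borel \<Otimes>\<^sub>M PiM (Jn n) (\<lambda>_. borel))"
    using measurable_compose[OF pr Cm] by simp
  then show ?thesis unfolding Phi_def by (intro borel_measurable_times measurable_const) auto
qed


definition "X1 \<omega> = restrict (\<lambda>k. \<xi> k \<omega>) {i}"

lemma distr_PiM_eq:
  assumes "I \<noteq> {}"
  shows "distr M (PiM I (\<lambda>_. borel)) (\<lambda>\<omega>. restrict (\<lambda>k. \<xi> k \<omega>) I) = PiM I (\<lambda>_. \<mu>)"
proof -
  interpret prob_space M by (rule PM)
  have iv: "indep_vars (\<lambda>_. borel) \<xi> I" by (rule indep_vars_subset[OF indep]) simp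
  have "distr M (PiM I (\<lambda>_. borel)) (\<lambda>x. \<lambda>j\<in>I. \<xi> j x) = PiM I (\<lambda>j. distr M borel (\<xi> j))"
    using indep_vars_iff_distr_eq_PiM'[where I=I and M'="\<lambda>_. borel" and X=\<xi>] iv assms xi_meas' by auto
  also have "PiM I (\<lambda>j. distr M borel (\<xi> j)) = PiM I (\<lambda>_. \<mu>)"
    by (rule PiM_cong) (auto intro: distr_xi')
  finally show ?thesis .
qed

lemma joint_distr:
  assumes n: "n \<ge> i + 1"
  shows "distr M (PiM {i} (\<lambda>_. borel) \<Otimes>\<^sub>M PiM (Jn n) (\<lambda>_. borel)) (\<lambda>\<omega>. (X1 \<omega>, Yn n \<omega>)) = PiM {i} (\<lambda>_. \<mu>) \<Otimes>\<^sub>M PiM (Jn n) (\<lambda>_. \<mu>)"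
proof -
  interpret prob_space M by (rule PM)
  have ind: "indep_var (PiM {i} (\<lambda>_. borel)) X1 (PiM (Jn n) (\<lambda>_. borel)) (Yn n)"
    unfolding X1_def[abs_def] Yn_def[abs_def]
    by (rule indep_var_restrict[OF indep]) (auto simp: Jn_def)
  have "distr M (PiM {i} (\<lambda>_. borel)) X1 \<Otimes>\<^sub>M distr M (PiM (Jn n) (\<lambda>_. borel)) (Yn n) = distr M (PiM {i} (\<lambda>_. borel) \<Otimes>\<^sub>M PiM (Jn n) (\<lambda>_. borel)) (\<lambda>x. (X1 x, Yn n x))"
    using ind unfolding indep_var_distribution_eq by blast
  moreover have "distr M (PiM {i} (\<lambda>_. borel)) X1 = PiM {i} (\<lambda>_. \<mu>)"
    unfolding X1_def[abs_def] by (rule distr_PiM_eq) simp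
  moreover have "distr M (PiM (Jn n) (\<lambda>_. borel)) (Yn n) = PiM (Jn n) (\<lambda>_. \<mu>)"
    unfolding Yn_def[abs_def] by (rule distr_PiM_eq[OF Jn_ne[OF n]])
  ultimately show ?thesis by simp
qed


lemma sets_pair_mu: "sets (\<mu> \<Otimes>\<^sub>M PiM I (\<lambda>_. \<mu>)) = sets (borel \<Otimes>\<^sub>M PiM I (\<lambda>_. borel))"
  by (intro sets_pair_measure_cong sets_mu' sets_PiM_cong refl)

lemma sets_pair_mu2: "sets (PiM I' (\<lambda>_. \<mu>) \<Otimes>\<^sub>M PiM I (\<lambda>_. \<mu>)) = sets (PiM I' (\<lambda>_. borel) \<Otimes>\<^sub>M PiM I (\<lambda>_. borel))"
  by (intro sets_pair_measure_cong sets_mu' sets_PiM_cong refl)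

lemma integral_rewrite:
  fixes G :: "'d \<Rightarrow> (nat \<Rightarrow> 'd) \<Rightarrow> real"
  assumes n: "n \<ge> i + 1"
    and Gm: "(\<lambda>p. G (fst p) (snd p)) \<in> borel_measurable (borel \<Otimes>\<^sub>M PiM (Jn n) (\<lambda>_. borel))"
    and Gb: "\<And>x y. \<bar>G x y\<bar> \<le> K"
  shows "(\<integral>\<omega>. G (\<xi> i \<omega>) (Yn n \<omega>) \<partial>M) = (\<integral>x. (\<integral>y. G x y \<partial>PiM (Jn n) (\<lambda>_. \<mu>)) \<partial>\<mu>)"
proof -
  interpret mu: prob_space \<mu> by (rule prob_mu')
  interpret PJ: prob_space "PiM (Jn n) (\<lambda>_. \<mu>)" by (rule prob_space_PiM) (simp add: prob_mu')
  interpret PI: prob_space "PiM {i} (\<lambda>_. \<mu>)" by (rule prob_space_PiM) (simp add: prob_mu')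
  interpret PP: pair_sigma_finite "PiM {i} (\<lambda>_. \<mu>)" "PiM (Jn n) (\<lambda>_. \<mu>)"
    by (intro pair_sigma_finite.intro PI.sigma_finite_measure_axioms PJ.sigma_finite_measure_axioms)
  interpret PS: product_sigma_finite "\<lambda>_. \<mu>"
    unfolding product_sigma_finite_def by (simp add: mu.sigma_finite_measure_axioms)
  define G' where "G' p = G (fst p i) (snd p)" for p :: "(nat \<Rightarrow> 'd) \<times> (nat \<Rightarrow> 'd)"
  have pm: "(\<lambda>p. (fst p i, snd p)) \<in> measurable (PiM {i} (\<lambda>_. borel) \<Otimes>\<^sub>M PiM (Jn n) (\<lambda>_. borel)) (borel \<Otimes>\<^sub>M PiM (Jn n) (\<lambda>_. (borel :: 'd measure)))"
    by (intro measurable_Pair measurable_snd measurable_compose[OF measurable_fst measurable_component_singleton]) simp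
  have G'm: "G' \<in> borel_measurable (PiM {i} (\<lambda>_. borel) \<Otimes>\<^sub>M PiM (Jn n) (\<lambda>_. borel))"
    unfolding G'_def using measurable_compose[OF pm Gm] by simp
  have Tm: "(\<lambda>\<omega>. (X1 \<omega>, Yn n \<omega>)) \<in> measurable M (PiM {i} (\<lambda>_. borel) \<Otimes>\<^sub>M PiM (Jn n) (\<lambda>_. borel))"
    unfolding X1_def[abs_def] Yn_def[abs_def]
    by (intro measurable_Pair measurable_restrict xi_meas')
  have "(\<integral>\<omega>. G (\<xi> i \<omega>) (Yn n \<omega>) \<partial>M) = (\<integral>\<omega>. G' (X1 \<omega>, Yn n \<omega>) \<partial>M)"
    by (simp add: G'_def X1_def)
  also have "\<dots> = integral\<^sup>L (distr M (PiM {i} (\<lambda>_. borel) \<Otimes>\<^sub>M PiM (Jn n) (\<lambda>_. borel)) (\<lambda>\<omega>. (X1 \<omega>, Yn n \<omega>))) G'"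
    by (rule integral_distr[OF Tm G'm, symmetric])
  also have "\<dots> = integral\<^sup>L (PiM {i} (\<lambda>_. \<mu>) \<Otimes>\<^sub>M PiM (Jn n) (\<lambda>_. \<mu>)) G'"
    by (simp add: joint_distr[OF n])
  also have "\<dots> = (\<integral>f. (\<integral>y. G' (f, y) \<partial>PiM (Jn n) (\<lambda>_. \<mu>)) \<partial>PiM {i} (\<lambda>_. \<mu>))"
  proof (rule PP.integral_fst'[symmetric])
    have G'm2: "G' \<in> borel_measurable (PiM {i} (\<lambda>_. \<mu>) \<Otimes>\<^sub>M PiM (Jn n) (\<lambda>_. \<mu>))"
      using G'm measurable_cong_sets[OF sets_pair_mu2 refl] by blast
    show "integrable (PiM {i} (\<lambda>_. \<mu>) \<Otimes>\<^sub>M PiM (Jn n) (\<lambda>_. \<mu>)) G'"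
    proof -
      interpret PPp: prob_space "PiM {i} (\<lambda>_. \<mu>) \<Otimes>\<^sub>M PiM (Jn n) (\<lambda>_. \<mu>)"
        by (intro prob_space_pair PI.prob_space_axioms PJ.prob_space_axioms)
      show ?thesis by (intro PPp.integrable_const_bound[where B=K] G'm2) (auto simp: G'_def Gb)
    qed
  qed
  also have "\<dots> = (\<integral>f. (\<lambda>x. \<integral>y. G x y \<partial>PiM (Jn n) (\<lambda>_. \<mu>)) (f i) \<partial>PiM {i} (\<lambda>_. \<mu>))"
    by (simp add: G'_def)
  also have "\<dots> = integral\<^sup>L (distr (PiM {i} (\<lambda>_. \<mu>)) \<mu> (\<lambda>f. f i)) (\<lambda>x. \<integral>y. G x y \<partial>PiM (Jn n) (\<lambda>_. \<mu>))"
  proof (rule integral_distr[symmetric])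
    show "(\<lambda>f. f i) \<in> measurable (PiM {i} (\<lambda>_. \<mu>)) \<mu>" by (rule measurable_component_singleton) simp
    have "(\<lambda>p. G (fst p) (snd p)) \<in> borel_measurable (\<mu> \<Otimes>\<^sub>M PiM (Jn n) (\<lambda>_. \<mu>))"
      using Gm measurable_cong_sets[OF sets_pair_mu refl] by blast
    then have "(\<lambda>(x, y). G x y) \<in> borel_measurable (\<mu> \<Otimes>\<^sub>M PiM (Jn n) (\<lambda>_. \<mu>))"
      by (simp add: case_prod_beta')
    then show "(\<lambda>x. \<integral>y. G x y \<partial>PiM (Jn n) (\<lambda>_. \<mu>)) \<in> borel_measurable \<mu>"
      by (rule PJ.borel_measurable_lebesgue_integral)
  qed
  also have "distr (PiM {i} (\<lambda>_. \<mu>)) \<mu> (\<lambda>f. f i) = \<mu>" by (rule PS.distr_singleton)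
  finally show ?thesis .
qed


lemma step2:
  fixes F :: "real \<Rightarrow> 'd \<Rightarrow> real"
  assumes Fm: "(\<lambda>p. F (fst p) (snd p)) \<in> borel_measurable borel"
    and Fc: "\<And>x z. isCont (\<lambda>z. F z x) z" and Fb: "\<And>z x. \<bar>F z x\<bar> \<le> K"
  shows "(\<lambda>n. \<integral>\<omega>. F (z_stat g \<xi> i n \<omega>) (\<xi> i \<omega>) \<partial>M) \<longlonglongrightarrow> (\<integral>x. (\<integral>z. F z x \<partial>Expo) \<partial>\<mu>)"
proof -
  interpret mu: prob_space \<mu> by (rule prob_mu')
  interpret E: real_distribution Expo by (rule real_distribution_Expo)
  define s where "s n x = (\<integral>y. F (Phi n x y) x \<partial>PiM (Jn n) (\<lambda>_. \<mu>))" for n x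
  define lim where "lim x = (\<integral>z. F z x \<partial>Expo)" for x
  have Gm: "(\<lambda>p. F (Phi n (fst p) (snd p)) (fst p)) \<in> borel_measurable (borel \<Otimes>\<^sub>M PiM (Jn n) (\<lambda>_. borel))" for n
  proof -
    have "(\<lambda>p. (Phi n (fst p) (snd p), fst p)) \<in> measurable (borel \<Otimes>\<^sub>M PiM (Jn n) (\<lambda>_. borel)) (borel \<Otimes>\<^sub>M (borel :: 'd measure))"
      by (intro measurable_Pair Phi_meas measurable_fst)
    then have "(\<lambda>p. (Phi n (fst p) (snd p), fst p)) \<in> measurable (borel \<Otimes>\<^sub>M PiM (Jn n) (\<lambda>_. borel)) (borel :: (real \<times> 'd) measure)"
      by (simp add: borel_prod)
    from measurable_compose[OF this Fm] show ?thesis by simp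
  qed
  have sm: "s n \<in> borel_measurable \<mu>" for n
  proof -
    interpret PJ: prob_space "PiM (Jn n) (\<lambda>_. \<mu>)" by (rule prob_space_PiM) (simp add: prob_mu')
    have "(\<lambda>p. F (Phi n (fst p) (snd p)) (fst p)) \<in> borel_measurable (\<mu> \<Otimes>\<^sub>M PiM (Jn n) (\<lambda>_. \<mu>))"
      using Gm[of n] measurable_cong_sets[OF sets_pair_mu refl] by blast
    then have "(\<lambda>(x, y). F (Phi n x y) x) \<in> borel_measurable (\<mu> \<Otimes>\<^sub>M PiM (Jn n) (\<lambda>_. \<mu>))"
      by (simp add: case_prod_beta')
    then show ?thesis unfolding s_def[abs_def] by (rule PJ.borel_measurable_lebesgue_integral)
  qed
  have limm: "lim \<in> borel_measurable \<mu>"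
  proof -
    have sw: "(\<lambda>p. (snd p, fst p)) \<in> measurable (\<mu> \<Otimes>\<^sub>M Expo) (borel :: (real \<times> 'd) measure)"
    proof -
      have a: "(\<lambda>p. (snd p, fst p)) \<in> measurable ((borel :: 'd measure) \<Otimes>\<^sub>M (borel :: real measure)) (borel \<Otimes>\<^sub>M (borel :: 'd measure))"
        by (intro measurable_Pair measurable_fst measurable_snd)
      have b: "sets (\<mu> \<Otimes>\<^sub>M Expo) = sets ((borel :: 'd measure) \<Otimes>\<^sub>M (borel :: real measure))"
        by (intro sets_pair_measure_cong sets_mu') (simp add: Expo_def)
      from a have "(\<lambda>p. (snd p, fst p)) \<in> measurable (\<mu> \<Otimes>\<^sub>M Expo) (borel \<Otimes>\<^sub>M (borel :: 'd measure))"
        using measurable_cong_sets[OF b refl] by blast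
      then show ?thesis by (simp only: borel_prod)
    qed
    have "(\<lambda>(x, z). F z x) \<in> borel_measurable (\<mu> \<Otimes>\<^sub>M Expo)"
      using measurable_compose[OF sw Fm] by (simp add: case_prod_beta')
    then show ?thesis unfolding lim_def[abs_def] by (rule E.borel_measurable_lebesgue_integral)
  qed
  have conv: "(\<lambda>n. integral\<^sup>L \<mu> (s n)) \<longlonglongrightarrow> integral\<^sup>L \<mu> lim"
  proof (rule integral_dominated_convergence[where w="\<lambda>_. K"])
    show "integrable \<mu> (\<lambda>_. K)" by simp
    show "AE x in \<mu>. (\<lambda>n. s n x) \<longlonglongrightarrow> lim x"
    proof (intro AE_I2)
      fix x
      have "(\<lambda>n. \<integral>y. F (real n * measure \<mu> (cball x (Min ((\<lambda>j. dist x (y j)) ` ({1..n} - {i}))))) x \<partial>PiM ({1..n} - {i}) (\<lambda>_. \<mu>))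
          \<longlonglongrightarrow> (\<integral>z. F z x \<partial>Expo)"
        by (rule inner_conv[OF prob_mu' sets_mu' sphere_null' Fc _ i1]) (use Fb in simp)
      then show "(\<lambda>n. s n x) \<longlonglongrightarrow> lim x" unfolding s_def lim_def Phi_def Jn_def .
    qed
    show "AE x in \<mu>. norm (s n x) \<le> K" for n
    proof (intro AE_I2)
      fix x
      have "\<bar>s n x\<bar> \<le> K" unfolding s_def
        by (rule prob_integral_bound) (auto intro: prob_space_PiM prob_mu' Fb)
      then show "norm (s n x) \<le> K" by simp
    qed
  qed (use sm limm in auto)
  have eq: "(\<integral>\<omega>. F (z_stat g \<xi> i n \<omega>) (\<xi> i \<omega>) \<partial>M) = integral\<^sup>L \<mu> (s n)" if n: "n \<ge> i + 1" for n
  proof -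
    have "(\<integral>\<omega>. F (z_stat g \<xi> i n \<omega>) (\<xi> i \<omega>) \<partial>M) = (\<integral>\<omega>. (\<lambda>x y. F (Phi n x y) x) (\<xi> i \<omega>) (Yn n \<omega>) \<partial>M)"
      by (simp add: z_eq)
    also have "\<dots> = (\<integral>x. (\<integral>y. (\<lambda>x y. F (Phi n x y) x) x y \<partial>PiM (Jn n) (\<lambda>_. \<mu>)) \<partial>\<mu>)"
      by (rule integral_rewrite[OF n _ Fb]) (use Gm[of n] in simp)
    finally show ?thesis by (simp add: s_def[abs_def])
  qed
  have "eventually (\<lambda>n. integral\<^sup>L \<mu> (s n) = (\<integral>\<omega>. F (z_stat g \<xi> i n \<omega>) (\<xi> i \<omega>) \<partial>M)) sequentially"
    unfolding eventually_sequentially using eq by metis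
  from Lim_transform_eventually[OF conv this] show ?thesis unfolding lim_def .
qed


lemma z_meas: "z_stat g \<xi> i n \<in> borel_measurable M"
proof -
  have Tm: "(\<lambda>\<omega>. (\<xi> i \<omega>, Yn n \<omega>)) \<in> measurable M (borel \<Otimes>\<^sub>M PiM (Jn n) (\<lambda>_. borel))"
    unfolding Yn_def[abs_def] by (intro measurable_Pair measurable_restrict xi_meas')
  have "(\<lambda>\<omega>. Phi n (\<xi> i \<omega>) (Yn n \<omega>)) \<in> borel_measurable M"
    using measurable_compose[OF Tm Phi_meas] by simp
  then show ?thesis by (simp add: z_eq[abs_def])
qed

lemma z_nonneg: "z_stat g \<xi> i n \<omega> \<ge> 0"
  unfolding z_stat_def
  by (simp add: lint_eq_measure'[OF borel_closed[OF closed_cball]])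

lemma tight:
  assumes e: "e > 0"
  shows "\<exists>A\<ge>0. eventually (\<lambda>n. measure M {\<omega> \<in> space M. A < z_stat g \<xi> i n \<omega>} < e) sequentially"
proof -
  interpret prob_space M by (rule PM)
  interpret mu: prob_space \<mu> by (rule prob_mu')
  interpret E: real_distribution Expo by (rule real_distribution_Expo)
  define a where "a = \<bar>ln (e / 2)\<bar> + 1"
  define \<psi> where "\<psi> z = max 0 (min 1 (z - a))" for z :: real
  have a0: "a \<ge> 0" unfolding a_def by simp
  have ea: "exp (- a) < e / 2"
  proof -
    have "- a < ln (e / 2)" unfolding a_def by linarith
    then have "exp (- a) < exp (ln (e / 2))" by simp
    then show ?thesis using e by simp
  qed
  have \<psi>c: "continuous_on UNIV \<psi>" unfolding \<psi>_def by (intro continuous_intros)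
  have \<psi>m: "\<psi> \<in> borel_measurable borel" using \<psi>c by (rule borel_measurable_continuous_onI)
  have \<psi>b: "\<bar>\<psi> z\<bar> \<le> 1" for z unfolding \<psi>_def by simp
  have lim: "(\<lambda>n. \<integral>\<omega>. \<psi> (z_stat g \<xi> i n \<omega>) \<partial>M) \<longlonglongrightarrow> (\<integral>x. (\<integral>z. \<psi> z \<partial>Expo) \<partial>\<mu>)"
  proof (rule step2[where F="\<lambda>z x. \<psi> z" and K=1])
    show "(\<lambda>p. \<psi> (fst p)) \<in> borel_measurable borel"
      by (intro borel_measurable_continuous_onI continuous_on_compose2[OF \<psi>c] continuous_intros) auto
    show "isCont (\<lambda>z. \<psi> z) z" for z using \<psi>c by (simp add: continuous_on_eq_continuous_at)
  qed (use \<psi>b in auto)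
  have "(\<integral>x. (\<integral>z. \<psi> z \<partial>Expo) \<partial>\<mu>) = (\<integral>z. \<psi> z \<partial>Expo)" by (simp add: mu.prob_space)
  also have "\<dots> \<le> (\<integral>z. indicator {a<..} z \<partial>Expo)"
  proof (rule integral_mono)
    show "integrable Expo \<psi>" by (rule E.integrable_const_bound[where B=1]) (use \<psi>b \<psi>m in auto)
    show "integrable Expo (indicator {a<..} :: real \<Rightarrow> real)" by (intro integrable_real_indicator) (auto simp: E.emeasure_eq_measure)
    show "\<psi> z \<le> indicator {a<..} z" for z unfolding \<psi>_def by (auto simp: indicator_def)
  qed
  also have "\<dots> = measure Expo {a<..}" by (simp add: E.borel_UNIV)
  also have "\<dots> = 1 - cdf Expo a"
  proof -
    have "{a<..} = space Expo - {..a}" using E.borel_UNIV by auto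
    then show ?thesis using E.prob_compl[of "{..a}"] by (simp add: cdf_def)
  qed
  also have "\<dots> = exp (- a)" using a0 by (simp add: cdf_Expo)
  finally have "(\<integral>x. (\<integral>z. \<psi> z \<partial>Expo) \<partial>\<mu>) < e" using ea e by linarith
  with lim have ev: "eventually (\<lambda>n. (\<integral>\<omega>. \<psi> (z_stat g \<xi> i n \<omega>) \<partial>M) < e) sequentially"
    by (simp add: order_tendstoD(2))
  have "measure M {\<omega> \<in> space M. a + 1 < z_stat g \<xi> i n \<omega>} \<le> (\<integral>\<omega>. \<psi> (z_stat g \<xi> i n \<omega>) \<partial>M)" for n
  proof -
    have S: "{\<omega> \<in> space M. a + 1 < z_stat g \<xi> i n \<omega>} \<in> sets M" using z_meas[of n] by measurable
    have "measure M {\<omega> \<in> space M. a + 1 < z_stat g \<xi> i n \<omega>} = (\<integral>\<omega>. indicator {\<omega> \<in> space M. a + 1 < z_stat g \<xi> i n \<omega>} \<omega> \<partial>M)"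
      using S by simp
    also have "\<dots> \<le> (\<integral>\<omega>. \<psi> (z_stat g \<xi> i n \<omega>) \<partial>M)"
    proof (rule integral_mono)
      show "integrable M (indicator {\<omega> \<in> space M. a + 1 < z_stat g \<xi> i n \<omega>} :: 'w \<Rightarrow> real)"
        using S by (intro integrable_real_indicator) (auto simp: emeasure_eq_measure)
      show "integrable M (\<lambda>\<omega>. \<psi> (z_stat g \<xi> i n \<omega>))"
        by (rule integrable_const_bound[where B=1]) (use \<psi>b measurable_compose[OF z_meas \<psi>m] in auto)
      show "indicator {\<omega> \<in> space M. a + 1 < z_stat g \<xi> i n \<omega>} \<omega> \<le> \<psi> (z_stat g \<xi> i n \<omega>)" for \<omega>
        unfolding \<psi>_def by (auto simp: indicator_def)
    qed
    finally show ?thesis .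
  qed
  then have "eventually (\<lambda>n. measure M {\<omega> \<in> space M. a + 1 < z_stat g \<xi> i n \<omega>} < e) sequentially"
    using ev by (auto elim!: eventually_mono intro: le_less_trans)
  then show ?thesis using a0 by (intro exI[of _ "a + 1"]) simp
qed

end

lemma slutsky_aux:
  fixes M :: "'w measure" and Z :: "nat \<Rightarrow> 'w \<Rightarrow> real" and X :: "nat \<Rightarrow> 'w \<Rightarrow> 'b::euclidean_space"
    and T :: "'w \<Rightarrow> 'b" and f :: "real \<times> 'b \<Rightarrow> real"
  assumes PM: "prob_space M"
    and Zm: "\<And>n. Z n \<in> borel_measurable M" and Z0: "\<And>n \<omega>. Z n \<omega> \<ge> 0"
    and Xm: "\<And>n. X n \<in> borel_measurable M" and Tm: "T \<in> borel_measurable M"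
    and cp: "conv_in_prob M X T"
    and fc: "continuous_on UNIV f" and fb: "\<And>p. \<bar>f p\<bar> \<le> K"
    and tight: "\<And>e. e > 0 \<Longrightarrow> \<exists>A\<ge>0. eventually (\<lambda>n. measure M {\<omega> \<in> space M. A < Z n \<omega>} < e) sequentially"
  shows "(\<lambda>n. (\<integral>\<omega>. f (Z n \<omega>, X n \<omega>) \<partial>M) - (\<integral>\<omega>. f (Z n \<omega>, T \<omega>) \<partial>M)) \<longlonglongrightarrow> 0"
proof -
  interpret prob_space M by fact
  have K0: "K \<ge> 0" using fb[of undefined] by simp
  have fm: "f \<in> borel_measurable borel" using fc by (rule borel_measurable_continuous_onI)
  have m1: "(\<lambda>\<omega>. f (Z n \<omega>, X n \<omega>)) \<in> borel_measurable M" for n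
    by (intro measurable_compose[OF _ fm] borel_measurable_Pair Zm Xm)
  have m2: "(\<lambda>\<omega>. f (Z n \<omega>, T \<omega>)) \<in> borel_measurable M" for n
    by (intro measurable_compose[OF _ fm] borel_measurable_Pair Zm Tm)
  have i1: "integrable M (\<lambda>\<omega>. f (Z n \<omega>, X n \<omega>))" for n
    by (rule integrable_const_bound[where B=K]) (use m1 fb in auto)
  have i2: "integrable M (\<lambda>\<omega>. f (Z n \<omega>, T \<omega>))" for n
    by (rule integrable_const_bound[where B=K]) (use m2 fb in auto)
  have main: "eventually (\<lambda>n. \<bar>(\<integral>\<omega>. f (Z n \<omega>, X n \<omega>) \<partial>M) - (\<integral>\<omega>. f (Z n \<omega>, T \<omega>) \<partial>M)\<bar> \<le> e + 2 * K * (3 * e)) sequentially"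
    if e: "e > 0" for e
  proof -
    obtain A where A0: "A \<ge> 0" and A: "eventually (\<lambda>n. measure M {\<omega> \<in> space M. A < Z n \<omega>} < e) sequentially"
      using tight[OF e] by blast
    define S where "S k = {\<omega> \<in> space M. real k < norm (T \<omega>)}" for k :: nat
    have Ss: "S k \<in> sets M" for k unfolding S_def using Tm by measurable
    have "(\<lambda>k. measure M (S k)) \<longlonglongrightarrow> measure M (\<Inter>k. S k)"
      by (rule finite_Lim_measure_decseq) (use Ss in \<open>auto simp: decseq_def S_def\<close>)
    moreover have "(\<Inter>k. S k) = {}"
    proof safe
      fix \<omega> assume "\<omega> \<in> (\<Inter>k. S k)"
      then have "real (nat \<lceil>norm (T \<omega>)\<rceil>) < norm (T \<omega>)" unfolding S_def by blast
      then show "\<omega> \<in> {}" by linarith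
    qed
    ultimately have "(\<lambda>k. measure M (S k)) \<longlonglongrightarrow> 0" by simp
    then have "eventually (\<lambda>k. measure M (S k) < e) sequentially" using e by (simp add: order_tendstoD(2))
    then obtain kB where kB: "measure M (S kB) < e" by (auto simp: eventually_sequentially)
    define B where "B = real kB"
    define C where "C = {0..A} \<times> cball (0::'b) (B + 1)"
    have "compact C" unfolding C_def by (intro compact_Times compact_Icc compact_cball)
    then have "uniformly_continuous_on C f" using fc by (intro compact_uniformly_continuous) (auto intro: continuous_on_subset)
    then obtain \<delta> where \<delta>0: "\<delta> > 0" and \<delta>: "\<And>p q. p \<in> C \<Longrightarrow> q \<in> C \<Longrightarrow> dist q p < \<delta> \<Longrightarrow> dist (f q) (f p) < e"
      unfolding uniformly_continuous_on_def using e by metis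
    define d where "d = min \<delta> 1 / 2"
    have d0: "d > 0" unfolding d_def using \<delta>0 by simp
    from cp d0 have P3: "(\<lambda>n. measure M {\<omega> \<in> space M. dist (X n \<omega>) (T \<omega>) > d}) \<longlonglongrightarrow> 0"
      unfolding conv_in_prob_def by blast
    then have P3': "eventually (\<lambda>n. measure M {\<omega> \<in> space M. dist (X n \<omega>) (T \<omega>) > d} < e) sequentially"
      using e by (simp add: order_tendstoD(2))
    show ?thesis
      using A P3'
    proof eventually_elim
      case (elim n)
      define G where "G = {\<omega> \<in> space M. Z n \<omega> \<le> A \<and> norm (T \<omega>) \<le> B \<and> dist (X n \<omega>) (T \<omega>) \<le> d}"
      have Gs: "G \<in> sets M" unfolding G_def using Zm[of n] Xm[of n] Tm by measurable
      have bound: "\<bar>f (Z n \<omega>, X n \<omega>) - f (Z n \<omega>, T \<omega>)\<bar> \<le> e + 2 * K * indicator (space M - G) \<omega>"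
        if "\<omega> \<in> space M" for \<omega>
      proof (cases "\<omega> \<in> G")
        case True
        then have h: "Z n \<omega> \<le> A" "norm (T \<omega>) \<le> B" "dist (X n \<omega>) (T \<omega>) \<le> d" unfolding G_def by auto
        have "norm (X n \<omega>) \<le> norm (T \<omega>) + dist (X n \<omega>) (T \<omega>)"
          by (metis dist_norm norm_triangle_sub add.commute)
        then have "norm (X n \<omega>) \<le> B + 1" using h d_def by linarith
        then have pC: "(Z n \<omega>, X n \<omega>) \<in> C" "(Z n \<omega>, T \<omega>) \<in> C" unfolding C_def using h Z0[of n \<omega>] by auto
        have "dist (Z n \<omega>, X n \<omega>) (Z n \<omega>, T \<omega>) = dist (X n \<omega>) (T \<omega>)" by (simp add: dist_Pair_Pair)
        also have "\<dots> < \<delta>" using h d_def \<delta>0 by linarith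
        finally have "dist (f (Z n \<omega>, X n \<omega>)) (f (Z n \<omega>, T \<omega>)) < e" using \<delta>[OF pC(2) pC(1)] by blast
        then show ?thesis using True K0 by (simp add: dist_real_def)
      next
        case False
        then have "indicator (space M - G) \<omega> = (1::real)" using that by simp
        moreover have "\<bar>f (Z n \<omega>, X n \<omega>) - f (Z n \<omega>, T \<omega>)\<bar> \<le> 2 * K"
          using fb[of "(Z n \<omega>, X n \<omega>)"] fb[of "(Z n \<omega>, T \<omega>)"] by linarith
        ultimately show ?thesis using e by simp
      qed
      have iG: "integrable M (\<lambda>\<omega>. e + 2 * K * indicator (space M - G) \<omega>)"
      proof (rule integrable_const_bound[where B="e + 2*K"])
        show "AE \<omega> in M. norm (e + 2 * K * indicator (space M - G) \<omega>) \<le> e + 2 * K"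
          using K0 e by (auto simp: indicator_def)
        show "(\<lambda>\<omega>. e + 2 * K * indicator (space M - G) \<omega>) \<in> borel_measurable M" using Gs by measurable
      qed
      have "\<bar>(\<integral>\<omega>. f (Z n \<omega>, X n \<omega>) \<partial>M) - (\<integral>\<omega>. f (Z n \<omega>, T \<omega>) \<partial>M)\<bar> = \<bar>\<integral>\<omega>. f (Z n \<omega>, X n \<omega>) - f (Z n \<omega>, T \<omega>) \<partial>M\<bar>"
        using i1 i2 by simp
      also have "\<dots> \<le> (\<integral>\<omega>. e + 2 * K * indicator (space M - G) \<omega> \<partial>M)"
      proof -
        have "\<bar>\<integral>\<omega>. f (Z n \<omega>, X n \<omega>) - f (Z n \<omega>, T \<omega>) \<partial>M\<bar> \<le> (\<integral>\<omega>. \<bar>f (Z n \<omega>, X n \<omega>) - f (Z n \<omega>, T \<omega>)\<bar> \<partial>M)"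
          by (rule integral_abs_bound)
        also have "\<dots> \<le> (\<integral>\<omega>. e + 2 * K * indicator (space M - G) \<omega> \<partial>M)"
          by (rule integral_mono) (use i1 i2 bound iG in auto)
        finally show ?thesis .
      qed
      also have "\<dots> = e + 2 * K * measure M (space M - G)"
      proof -
        have ii: "integrable M (\<lambda>\<omega>. 2 * K * indicator (space M - G) \<omega>)"
          using Gs by (intro integrable_mult_right integrable_real_indicator) (auto simp: emeasure_eq_measure)
        have "(\<integral>\<omega>. e + 2 * K * indicator (space M - G) \<omega> \<partial>M) = (\<integral>\<omega>. e \<partial>M) + (\<integral>\<omega>. 2 * K * indicator (space M - G) \<omega> \<partial>M)"
          using Bochner_Integration.integral_add[where M=M and f="\<lambda>_. e" and g="\<lambda>\<omega>. 2 * K * indicator (space M - G) \<omega>"] ii by simp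
        also have "\<dots> = e + 2 * K * measure M (space M - G)"
          by (simp add: prob_space Int_absorb2)
        finally show ?thesis .
      qed
      also have "measure M (space M - G) \<le> 3 * e"
      proof -
        have "space M - G \<subseteq> {\<omega> \<in> space M. A < Z n \<omega>} \<union> S kB \<union> {\<omega> \<in> space M. dist (X n \<omega>) (T \<omega>) > d}"
          unfolding G_def S_def B_def by auto
        then have "measure M (space M - G) \<le> measure M ({\<omega> \<in> space M. A < Z n \<omega>} \<union> S kB \<union> {\<omega> \<in> space M. dist (X n \<omega>) (T \<omega>) > d})"
          by (intro finite_measure_mono) (use Zm[of n] Xm[of n] Tm Ss in measurable)
        also have "\<dots> \<le> measure M ({\<omega> \<in> space M. A < Z n \<omega>} \<union> S kB) + measure M {\<omega> \<in> space M. dist (X n \<omega>) (T \<omega>) > d}"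
          by (intro measure_Un_le) (use Zm[of n] Xm[of n] Tm Ss in measurable)
        also have "\<dots> \<le> measure M {\<omega> \<in> space M. A < Z n \<omega>} + measure M (S kB) + measure M {\<omega> \<in> space M. dist (X n \<omega>) (T \<omega>) > d}"
          using measure_Un_le[where M=M and A="{\<omega> \<in> space M. A < Z n \<omega>}" and B="S kB"] Zm[of n] Ss by (simp add: measurable_sets_Collect)
        finally show ?thesis using elim kB by linarith
      qed
      then have "e + 2 * K * measure M (space M - G) \<le> e + 2 * K * (3 * e)"
        using K0 mult_left_mono[of "measure M (space M - G)" "3 * e" "2 * K"] by simp
      finally show ?case .
    qed
  qed
  show ?thesis
  proof (rule LIMSEQ_I)
    fix r :: real assume r: "r > 0"
    define e where "e = r / (2 * (1 + 6 * K))"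
    have e0: "e > 0" unfolding e_def using r K0 by simp
    have pos: "1 + 6 * K > 0" using K0 by simp
    have "e + 2 * K * (3 * e) = e * (1 + 6 * K)" by (simp add: algebra_simps)
    also have "\<dots> = r / 2" unfolding e_def using pos by (simp add: divide_simps)
    finally have "e + 2 * K * (3 * e) = r / 2" .
    then have "eventually (\<lambda>n. norm ((\<integral>\<omega>. f (Z n \<omega>, X n \<omega>) \<partial>M) - (\<integral>\<omega>. f (Z n \<omega>, T \<omega>) \<partial>M) - 0) < r) sequentially"
      using main[OF e0] r by (auto elim!: eventually_mono)
    then show "\<exists>no. \<forall>n\<ge>no. norm ((\<integral>\<omega>. f (Z n \<omega>, X n \<omega>) \<partial>M) - (\<integral>\<omega>. f (Z n \<omega>, T \<omega>) \<partial>M) - 0) < r"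
      by (simp add: eventually_sequentially)
  qed
qed

theorem proposition5:
  fixes M :: "'w measure"
    and \<xi> :: "nat \<Rightarrow> 'w \<Rightarrow> 'd::euclidean_space"
    and g :: "'d \<Rightarrow> real"
    and i :: nat
    and Xn :: "nat \<Rightarrow> 'w \<Rightarrow> 'b::euclidean_space"
    and h :: "'d \<Rightarrow> 'b"
  assumes "prob_space M"
    and "g \<in> borel_measurable lborel" and "\<And>x. g x \<ge> 0"
    and "\<And>j. distributed M lborel (\<xi> j) (\<lambda>x. ennreal (g x))"
    and "prob_space.indep_vars M (\<lambda>_. borel) \<xi> UNIV"
    and "i \<ge> 1"
    and "\<And>n. Xn n \<in> borel_measurable M"
    and "continuous_on UNIV h"
    and "conv_in_prob M Xn (\<lambda>\<omega>. h (\<xi> i \<omega>))"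
  shows "conv_in_dist M (\<lambda>n \<omega>. (z_stat g \<xi> i n \<omega>, Xn n \<omega>))
           (density lborel (\<lambda>x. ennreal (exponential_density 1 x))
              \<Otimes>\<^sub>M distr M borel (\<lambda>\<omega>. h (\<xi> i \<omega>)))"
proof -
  note A6 = assms(1-6)
  interpret prob_space M by (rule assms(1))
  interpret mu: prob_space "mu g" by (rule prob_mu[OF assms(1-4)])
  interpret E: real_distribution Expo by (rule real_distribution_Expo)
  have hm: "h \<in> borel_measurable borel" using assms(8) by (rule borel_measurable_continuous_onI)
  have xim: "\<xi> i \<in> borel_measurable M" by (rule xi_meas[OF assms(1-4)])
  have Tm: "(\<lambda>\<omega>. h (\<xi> i \<omega>)) \<in> borel_measurable M" by (rule measurable_compose[OF xim hm])
  define \<nu> where "\<nu> = distr (mu g) borel h"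
  have \<nu>eq: "distr M borel (\<lambda>\<omega>. h (\<xi> i \<omega>)) = \<nu>"
  proof -
    have d: "distr M borel (\<xi> i) = mu g" by (rule distr_xi[OF assms(1-4)])
    show ?thesis unfolding \<nu>_def d[symmetric] using distr_distr[OF hm xim] by (simp add: comp_def)
  qed
  have hmu: "h \<in> measurable (mu g) borel"
    using hm measurable_cong_sets[OF sets_mu[OF assms(1-4)] refl] by blast
  interpret nu: prob_space \<nu> unfolding \<nu>_def by (rule mu.prob_space_distr[OF hmu])
  show ?thesis unfolding conv_in_dist_def
  proof (intro allI impI)
    fix f :: "real \<times> 'b \<Rightarrow> real"
    assume fc: "continuous_on UNIV f" and fbd: "bounded (range f)"
    obtain K where K: "\<And>p. \<bar>f p\<bar> \<le> K" using fbd unfolding bounded_iff by auto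
    have fm: "f \<in> borel_measurable borel" using fc by (rule borel_measurable_continuous_onI)
    define L where "L = (\<integral>x. (\<integral>z. f (z, h x) \<partial>Expo) \<partial>mu g)"
    have conv2: "(\<lambda>n. \<integral>\<omega>. f (z_stat g \<xi> i n \<omega>, h (\<xi> i \<omega>)) \<partial>M) \<longlonglongrightarrow> L"
      unfolding L_def
    proof (rule step2[OF A6, where F="\<lambda>z x. f (z, h x)" and K=K])
      have "continuous_on UNIV (\<lambda>p. f (fst p, h (snd p)))"
        by (intro continuous_on_compose2[OF fc] continuous_intros continuous_on_compose2[OF assms(8)]) auto
      then show "(\<lambda>p. f (fst p, h (snd p))) \<in> borel_measurable borel" by (rule borel_measurable_continuous_onI)
      show "isCont (\<lambda>z. f (z, h x)) z" for x z
      proof -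
        have "continuous_on UNIV (\<lambda>z. f (z, h x))"
          by (intro continuous_on_compose2[OF fc] continuous_intros) auto
        then show ?thesis by (simp add: continuous_on_eq_continuous_at)
      qed
    qed (use K in auto)
    have conv1: "(\<lambda>n. (\<integral>\<omega>. f (z_stat g \<xi> i n \<omega>, Xn n \<omega>) \<partial>M) - (\<integral>\<omega>. f (z_stat g \<xi> i n \<omega>, h (\<xi> i \<omega>)) \<partial>M)) \<longlonglongrightarrow> 0"
      by (rule slutsky_aux[OF assms(1) z_meas[OF A6] z_nonneg[OF A6] assms(7) Tm assms(9) fc K tight[OF A6]])
    have "(\<lambda>n. ((\<integral>\<omega>. f (z_stat g \<xi> i n \<omega>, Xn n \<omega>) \<partial>M) - (\<integral>\<omega>. f (z_stat g \<xi> i n \<omega>, h (\<xi> i \<omega>)) \<partial>M))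
            + (\<integral>\<omega>. f (z_stat g \<xi> i n \<omega>, h (\<xi> i \<omega>)) \<partial>M)) \<longlonglongrightarrow> 0 + L"
      by (rule tendsto_add[OF conv1 conv2])
    then have lim: "(\<lambda>n. \<integral>\<omega>. f (z_stat g \<xi> i n \<omega>, Xn n \<omega>) \<partial>M) \<longlonglongrightarrow> L" by simp
    have "(\<integral>x. f x \<partial>(Expo \<Otimes>\<^sub>M \<nu>)) = L"
    proof -
      interpret PS: pair_sigma_finite Expo \<nu>
        by (intro pair_sigma_finite.intro E.sigma_finite_measure_axioms nu.sigma_finite_measure_axioms)
      have sets1: "sets (Expo \<Otimes>\<^sub>M \<nu>) = sets ((borel :: real measure) \<Otimes>\<^sub>M (borel :: 'b measure))"
        by (intro sets_pair_measure_cong) (auto simp: \<nu>_def)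
      have sets2: "sets (Expo \<Otimes>\<^sub>M \<nu>) = sets (borel :: (real \<times> 'b) measure)"
        unfolding sets1 by (simp only: borel_prod)
      have fm2: "f \<in> borel_measurable (Expo \<Otimes>\<^sub>M \<nu>)"
        using fm measurable_cong_sets[OF sets2 refl] by blast
      interpret PP: prob_space "Expo \<Otimes>\<^sub>M \<nu>" by (intro prob_space_pair E.prob_space_axioms nu.prob_space_axioms)
      have int: "integrable (Expo \<Otimes>\<^sub>M \<nu>) (\<lambda>(x, y). f (x, y))"
        by (simp, rule PP.integrable_const_bound[where B=K]) (use fm2 K in auto)
      have "(\<integral>x. f x \<partial>(Expo \<Otimes>\<^sub>M \<nu>)) = (\<integral>y. (\<integral>x. f (x, y) \<partial>Expo) \<partial>\<nu>)"
        using PS.integral_snd[OF int] by simp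
      also have "\<dots> = (\<integral>x. (\<lambda>y. \<integral>z. f (z, y) \<partial>Expo) (h x) \<partial>mu g)"
        unfolding \<nu>_def
      proof (rule integral_distr)
        show "h \<in> measurable (mu g) borel"
          using hm measurable_cong_sets[OF sets_mu[OF assms(1-4)] refl] by blast
        have sw: "(\<lambda>p. (snd p, fst p)) \<in> measurable ((borel :: 'b measure) \<Otimes>\<^sub>M Expo) (borel :: (real \<times> 'b) measure)"
        proof -
          have a: "(\<lambda>p. (snd p, fst p)) \<in> measurable ((borel :: 'b measure) \<Otimes>\<^sub>M (borel :: real measure)) (borel \<Otimes>\<^sub>M (borel :: 'b measure))"
            by (intro measurable_Pair measurable_fst measurable_snd)
          have b: "sets ((borel :: 'b measure) \<Otimes>\<^sub>M Expo) = sets ((borel :: 'b measure) \<Otimes>\<^sub>M (borel :: real measure))"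
            by (intro sets_pair_measure_cong) (auto simp: Expo_def)
          from a have "(\<lambda>p. (snd p, fst p)) \<in> measurable ((borel :: 'b measure) \<Otimes>\<^sub>M Expo) (borel \<Otimes>\<^sub>M (borel :: 'b measure))"
            using measurable_cong_sets[OF b refl] by blast
          then show ?thesis by (simp only: borel_prod)
        qed
        have "(\<lambda>(y, z). f (z, y)) \<in> borel_measurable ((borel :: 'b measure) \<Otimes>\<^sub>M Expo)"
          using measurable_compose[OF sw fm] by (simp add: case_prod_beta')
        then show "(\<lambda>y. \<integral>z. f (z, y) \<partial>Expo) \<in> borel_measurable borel"
          by (rule E.borel_measurable_lebesgue_integral)
      qed
      finally show ?thesis unfolding L_def by simp
    qed
    then show "(\<lambda>n. \<integral>\<omega>. f (z_stat g \<xi> i n \<omega>, Xn n \<omega>) \<partial>M) \<longlonglongrightarrow>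
        (\<integral>x. f x \<partial>(density lborel (\<lambda>x. ennreal (exponential_density 1 x)) \<Otimes>\<^sub>M distr M borel (\<lambda>\<omega>. h (\<xi> i \<omega>))))"
      using lim unfolding \<nu>eq Expo_def[symmetric] by simp
  qed
qed

end
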